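(* $$\int_{0}^{1}\frac{\log\big((1-x)(x^2+1)\big)\,\log(\log x)}{x}\,dx=\frac18\left(-6\zeta'(2)+(\gamma-i\pi)\pi^2\right),$$ where $\gamma$ is Euler's constant and $\zeta$ the Riemann zeta function.
   Context: For $x\in(0,1)$, $\log(\log x)=\log|\log x|+i\pi$ (principal branch). *)

theory Defs
  imports "HOL-Analysis.Analysis"
begin

text \<open>Only its derivative at s = 2 is used; since the half-plane is open, this
  coincides with the derivative of the analytically continued zeta.\<close>
definition riemann_zeta :: "complex \<Rightarrow> complex" where
  "riemann_zeta s = (if Re s > 1 then (\<Sum>n. 1 / (of_nat (Suc n)) powr s) else 0)"

end

theory Submission
  imports Defs
begin


lemma gamma_deriv1: "(Gamma has_real_derivative (- euler_mascheroni)) (at (1::real))"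
  using has_field_derivative_Gamma[of "1::real" UNIV] by simp

lemma gamma_int0:
  assumes "x > (0::real)"
  shows "((\<lambda>t. t powr (x-1) / exp t) has_integral Gamma x) {0<..}"
proof -
  have "((\<lambda>t. t powr (x-1) / exp t) has_integral Gamma x) {0..}"
    by (rule Gamma_integral_real) fact
  moreover have "negligible {t \<in> {0..} - {0<..}. t powr (x-1) / exp t \<noteq> (0::real)}"
    by (rule negligible_subset[of "{0}"]) auto
  ultimately show ?thesis
    by (subst has_integral_spike_set_eq[of _ "{0..}"]) (auto intro: negligible_subset[of "{}"])
qed

lemma gamma_int0':
  assumes "x > (0::real)" "x - 1 = y"
  shows "((\<lambda>t. t powr y / exp t) has_integral Gamma x) {0<..}"
  using gamma_int0[OF assms(1)] assms(2) by simp

lemma ln_abs_bound: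
  assumes "t > (0::real)"
  shows "\<bar>ln t\<bar> \<le> 2 * t powr (-1/2) + t"
proof (cases "t \<ge> 1")
  case True
  then have "ln t \<le> t" using ln_le_minus_one[of t] assms by linarith
  moreover have "ln t \<ge> 0" using True by simp
  moreover have "t powr (-1/2) \<ge> 0" by simp
  ultimately show ?thesis by linarith
next
  case False
  have "ln (t powr (-1/2)) = (-1/2) * ln t" using assms by (simp add: ln_powr)
  moreover have "ln (t powr (-1/2)) \<le> t powr (-1/2)"
    using ln_le_minus_one[of "t powr (-1/2)"] assms by simp
  moreover have "ln t < 0" using False assms by simp
  ultimately show ?thesis using assms by linarith
qed

lemma dq_bound:
  assumes "t > (0::real)" "0 < h" "h \<le> 1"
  shows "\<bar>(t powr h - 1) / h\<bar> \<le> \<bar>ln t\<bar> * (1 + t)"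
proof -
  define a where "a = ln t"
  have tp: "t powr h = exp (h * a)" using assms by (simp add: powr_def a_def mult.commute)
  show ?thesis
  proof (cases "a \<ge> 0")
    case True
    have "exp (h*a) - 1 \<le> h * a * exp (h*a)"
    proof -
      have "1 - h*a \<le> exp (-(h*a))" using exp_ge_add_one_self[of "-(h*a)"] by simp
      hence "(1 - h*a) * exp (h*a) \<le> exp (-(h*a)) * exp (h*a)" by (simp add: mult_right_mono)
      thus ?thesis by (simp add: exp_minus field_simps)
    qed
    moreover have "exp (h*a) \<le> t"
    proof -
      have "h*a \<le> a" using True assms by (simp add: mult_left_le_one_le)
      hence "exp (h*a) \<le> exp a" by simp
      thus ?thesis using assms by (simp add: a_def)
    qed
    moreover have "exp (h*a) \<ge> 1" using True assms by simp
    ultimately have "0 \<le> (exp (h*a) - 1)/h" "(exp (h*a) - 1)/h \<le> a * t"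
    proof -
      show "0 \<le> (exp (h*a) - 1)/h" using \<open>exp (h*a) \<ge> 1\<close> assms by simp
      have "(exp (h*a) - 1)/h \<le> a * exp (h*a)"
        using \<open>exp (h*a) - 1 \<le> h * a * exp (h*a)\<close> assms by (simp add: divide_le_eq mult.commute mult.left_commute)
      also have "\<dots> \<le> a * t" using \<open>exp (h*a) \<le> t\<close> True by (simp add: mult_left_mono)
      finally show "(exp (h*a) - 1)/h \<le> a * t" .
    qed
    hence "\<bar>(t powr h - 1)/h\<bar> \<le> a * t" using tp by simp
    also have "a * t \<le> \<bar>a\<bar> * (1 + t)" using True assms by (simp add: algebra_simps)
    finally show ?thesis by (simp add: a_def)
  next
    case False
    have "1 + h*a \<le> exp (h*a)" using exp_ge_add_one_self[of "h*a"] by simp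
    moreover have "exp (h*a) \<le> 1" using False assms by (simp add: mult_nonneg_nonpos)
    ultimately have "\<bar>(exp (h*a) - 1)/h\<bar> \<le> -a" using assms by (simp add: field_simps abs_if)
    hence "\<bar>(t powr h - 1)/h\<bar> \<le> -a" using tp by simp
    also have "-a \<le> \<bar>a\<bar> * (1 + t)" using False assms by (simp add: algebra_simps mult_nonpos_nonneg)
    finally show ?thesis by (simp add: a_def)
  qed
qed

definition gdom :: "real \<Rightarrow> real" where
  "gdom t = (2 * t powr (-1/2) + 2 * t powr (1/2) + t + t^2) / exp t"

lemma gdom_integrable: "gdom integrable_on {0<..}"
proof -
  have i1: "((\<lambda>t. t powr (-1/2) / exp t) has_integral Gamma (1/2::real)) {0<..}"
    by (rule gamma_int0') simp_all
  have i2: "((\<lambda>t. t powr (1/2) / exp t) has_integral Gamma (3/2::real)) {0<..}"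
    by (rule gamma_int0') simp_all
  have i3: "((\<lambda>t. t / exp t) has_integral Gamma (2::real)) {0<..}"
  proof -
    have c: "((\<lambda>t. t powr (2-1::real) / exp t) has_integral Gamma (2::real)) {0<..}"
      by (rule gamma_int0') simp_all
    have "((\<lambda>t. t / exp t) has_integral Gamma (2::real)) {0<..} = ((\<lambda>t. t powr (2-1::real) / exp t) has_integral Gamma (2::real)) {0<..}"
      by (rule has_integral_cong) simp
    with c show ?thesis by (rule iffD2[rotated])
  qed
  have i4: "((\<lambda>t. t^2 / exp t) has_integral Gamma (3::real)) {0<..}"
  proof -
    have c: "((\<lambda>t. t powr (3-1::real) / exp t) has_integral Gamma (3::real)) {0<..}"
      by (rule gamma_int0') simp_all
    have "((\<lambda>t. t^2 / exp t) has_integral Gamma (3::real)) {0<..} = ((\<lambda>t. t powr (3-1::real) / exp t) has_integral Gamma (3::real)) {0<..}"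
      by (rule has_integral_cong) simp
    with c show ?thesis by (rule iffD2[rotated])
  qed
  have "((\<lambda>t::real. 2 * (t powr (-1/2) / exp t) + 2 * (t powr (1/2) / exp t) + t / exp t + t^2 / exp t)
     has_integral (2 * Gamma (1/2) + 2 * Gamma (3/2) + Gamma 2 + Gamma (3::real))) {0<..}"
    by (rule has_integral_add[OF has_integral_add[OF has_integral_add[OF has_integral_mult_right[OF i1] has_integral_mult_right[OF i2]] i3] i4])
  hence I: "(\<lambda>t::real. 2 * (t powr (-1/2) / exp t) + 2 * (t powr (1/2) / exp t) + t / exp t + t^2 / exp t) integrable_on {0<..}"
    by (rule has_integral_integrable)
  have e: "gdom = (\<lambda>t::real. 2 * (t powr (-1/2) / exp t) + 2 * (t powr (1/2) / exp t) + t / exp t + t^2 / exp t)"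
    by (rule ext) (simp only: gdom_def add_divide_distrib times_divide_eq_right)
  show ?thesis unfolding e by (rule I)
qed

lemma gdom_bound:
  assumes "t > (0::real)" "0 < h" "h \<le> 1"
  shows "\<bar>((t powr h - 1) / h) / exp t\<bar> \<le> gdom t" "\<bar>ln t / exp t\<bar> \<le> gdom t"
proof -
  have "t powr (-1/2) * t = t powr (-1/2) * t powr 1" using assms by (simp add: abs_of_pos)
  also have "\<dots> = t powr (-1/2 + 1)" by (rule powr_add[symmetric])
  also have "(-1/2::real) + 1 = 1/2" by simp
  finally have e: "t powr (-1/2) * t = t powr (1/2)" .
  have p: "0 \<le> t powr (-1/2)" by simp
  have "\<bar>ln t\<bar> * (1 + t) \<le> (2 * t powr (-1/2) + t) * (1 + t)"
    using ln_abs_bound[OF assms(1)] assms by (simp add: mult_right_mono)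
  also have "\<dots> = 2 * t powr (-1/2) + 2 * t powr (1/2) + t + t^2"
    using e by (simp add: algebra_simps power2_eq_square)
  finally have B: "\<bar>ln t\<bar> * (1 + t) \<le> 2 * t powr (-1/2) + 2 * t powr (1/2) + t + t^2" .
  have "\<bar>((t powr h - 1) / h) / exp t\<bar> = \<bar>(t powr h - 1) / h\<bar> / exp t" by (subst abs_divide) simp
  also have "\<dots> \<le> (2 * t powr (-1/2) + 2 * t powr (1/2) + t + t^2) / exp t"
    using dq_bound[OF assms] B by (intro divide_right_mono) auto
  finally show "\<bar>((t powr h - 1) / h) / exp t\<bar> \<le> gdom t" unfolding gdom_def .
  have "\<bar>ln t\<bar> \<le> \<bar>ln t\<bar> * (1 + t)" using assms by (simp add: mult_le_cancel_left1)
  with B have "\<bar>ln t\<bar> \<le> 2 * t powr (-1/2) + 2 * t powr (1/2) + t + t^2" by linarith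
  hence "\<bar>ln t\<bar> / exp t \<le> (2 * t powr (-1/2) + 2 * t powr (1/2) + t + t^2) / exp t"
    by (intro divide_right_mono) auto
  moreover have "\<bar>ln t / exp t\<bar> = \<bar>ln t\<bar> / exp t" by (subst abs_divide) simp
  ultimately show "\<bar>ln t / exp t\<bar> \<le> gdom t" unfolding gdom_def by simp
qed

lemma seq_dq:
  assumes "(g has_real_derivative D) (at a)"
  shows "(\<lambda>n. (g (a + 1 / (real n + 2)) - g a) / (1 / (real n + 2))) \<longlonglongrightarrow> D"
proof -
  have L: "(\<lambda>h. (g (a + h) - g a) / h) \<midarrow>0\<rightarrow> D" using assms by (simp add: DERIV_def)
  have s: "(\<lambda>n. 1 / (real n + 2)) \<longlonglongrightarrow> 0"
  proof -
    have "(\<lambda>n. 1 / (real (n+2))) \<longlonglongrightarrow> 0"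
      using LIMSEQ_ignore_initial_segment[OF lim_const_over_n[of 1], of 2] by (simp add: o_def)
    thus ?thesis by (simp add: add.commute)
  qed
  note all = iffD2[OF LIMSEQ_SEQ_conv L]
  show ?thesis using all[rule_format, of "\<lambda>n. 1 / (real n + 2)"] s by simp
qed



lemma gamma_ln:
  "((\<lambda>t::real. ln t / exp t) has_integral - euler_mascheroni) {0<..}"
  "(\<lambda>t::real. ln t / exp t) absolutely_integrable_on {0<..}"
proof -
  define h where "h n = 1 / (real n + 2)" for n
  have h: "0 < h n" "h n \<le> 1" for n unfolding h_def by auto
  define f where "f n t = ((t powr (h n) - 1) / h n) / exp t" for n t
  define y where "y n = (Gamma (1 + h n) - 1) / h n" for n
  have fi: "(f n has_integral y n) {0<..}" for n
  proof -
    have a: "((\<lambda>t. t powr (h n) / exp t) has_integral Gamma (1 + h n)) {0<..}"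
      using gamma_int0[of "1 + h n"] h[of n] by simp
    have b: "((\<lambda>t::real. 1 / exp t) has_integral 1) {0<..}"
    proof -
      have c: "((\<lambda>t::real. t powr (1-1::real) / exp t) has_integral 1) {0<..}"
        using gamma_int0[of "1::real"] by simp
      have "((\<lambda>t::real. 1 / exp t) has_integral 1) {0<..} = ((\<lambda>t::real. t powr (1-1::real) / exp t) has_integral 1) {0<..}"
        by (rule has_integral_cong) force
      with c show ?thesis by simp
    qed
    have "((\<lambda>t. (t powr (h n) / exp t - 1 / exp t) / h n) has_integral (Gamma (1 + h n) - 1) / h n) {0<..}"
      by (intro has_integral_divide has_integral_diff a b)
    thus ?thesis unfolding f_def y_def by (simp add: diff_divide_distrib ac_simps)
  qed
  have conv: "(\<lambda>n. f n t) \<longlonglongrightarrow> ln t / exp t" if "t \<in> {0<..}" for t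
  proof -
    have t: "t > 0" using that by simp
    have d: "((\<lambda>x. exp (x * ln t)) has_real_derivative exp (0 * ln t) * ln t) (at 0)"
      by (auto intro!: derivative_eq_intros)
    have "(\<lambda>n. (exp (h n * ln t) - exp (0 * ln t)) / h n) \<longlonglongrightarrow> exp (0 * ln t) * ln t"
      using seq_dq[OF d] unfolding h_def by simp
    hence "(\<lambda>n. (t powr (h n) - 1) / h n) \<longlonglongrightarrow> ln t" using t by (simp add: powr_def)
    hence "(\<lambda>n. ((t powr (h n) - 1) / h n) / exp t) \<longlonglongrightarrow> ln t / exp t"
      by (intro tendsto_divide) auto
    thus ?thesis unfolding f_def .
  qed
  have yconv: "y \<longlonglongrightarrow> - euler_mascheroni"
  proof -
    show ?thesis using seq_dq[OF gamma_deriv1] unfolding y_def h_def by simp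
  qed
  have bnd: "\<forall>t\<in>{0<..}. norm (f n t) \<le> gdom t" for n
  proof
    fix t :: real assume "t \<in> {0<..}"
    thus "norm (f n t) \<le> gdom t" unfolding f_def real_norm_def
      using gdom_bound(1)[of t "h n"] h[of n] by simp
  qed
  show "((\<lambda>t::real. ln t / exp t) has_integral - euler_mascheroni) {0<..}"
  proof -
    have conv': "\<forall>t\<in>{0<..}. (\<lambda>n. f n t) \<longlonglongrightarrow> ln t / exp t" using conv by blast
    show ?thesis using has_integral_dominated_convergence[OF fi gdom_integrable bnd conv' yconv] .
  qed
  hence I: "(\<lambda>t::real. ln t / exp t) integrable_on {0<..}" by (rule has_integral_integrable)
  show "(\<lambda>t::real. ln t / exp t) absolutely_integrable_on {0<..}"
  proof (rule absolutely_integrable_integrable_bound[OF _ I gdom_integrable])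
    fix t :: real assume "t \<in> {0<..}"
    thus "norm (ln t / exp t) \<le> gdom t" using gdom_bound(2)[of t 1] by simp
  qed
qed



lemma subst_exp:
  fixes k :: real and \<psi> :: "real \<Rightarrow> real"
  assumes k: "k > 0"
  shows "((\<lambda>w. (1/k) * exp (-w) * \<psi> (w/k)) absolutely_integrable_on {0<..} \<and>
           integral {0<..} (\<lambda>w. (1/k) * exp (-w) * \<psi> (w/k)) = b) \<longleftrightarrow>
         ((\<lambda>x. x powr (k-1) * \<psi> (-ln x)) absolutely_integrable_on {0<..<1} \<and>
           integral {0<..<1} (\<lambda>x. x powr (k-1) * \<psi> (-ln x)) = b)"
proof -
  define g where "g w = exp (-w/k)" for w
  define g' where "g' w = -(1/k) * exp (-w/k)" for w
  have S: "{(0::real)<..} \<in> sets lebesgue" by (intro sets_completionI_sets) simp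
  have der: "(g has_field_derivative g' x) (at x within {0<..})" for x
    unfolding g_def g'_def using k by (auto intro!: derivative_eq_intros)
  have inj: "inj_on g {0<..}"
    unfolding g_def inj_on_def using k by auto
  have img: "g ` {0<..} = {0<..<1}"
  proof
    show "g ` {0<..} \<subseteq> {0<..<1}" unfolding g_def using k by auto
    show "{0<..<1} \<subseteq> g ` {0<..}"
    proof
      fix x :: real assume x: "x \<in> {0<..<1}"
      have "x = g (-k * ln x)" unfolding g_def using x k by simp
      moreover have "-k * ln x \<in> {0<..}" using x k by (simp add: mult_pos_neg)
      ultimately show "x \<in> g ` {0<..}" by blast
    qed
  qed
  have fe: "(\<lambda>w. \<bar>g' w\<bar> * (g w powr (k-1) * \<psi> (-ln (g w)))) = (\<lambda>w. (1/k) * exp (-w) * \<psi> (w/k))"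
  proof
    fix w :: real
    have "\<bar>g' w\<bar> = (1/k) * exp (-w/k)" unfolding g'_def using k by simp
    moreover have "g w powr (k-1) = exp ((k-1) * (-w/k))" unfolding g_def by (simp add: powr_def)
    moreover have "-ln (g w) = w/k" unfolding g_def by simp
    moreover have "exp (-w/k) * exp ((k-1) * (-w/k)) = exp (-w)"
    proof -
      have "-w/k + (k-1) * (-w/k) = -w" using k by (simp add: field_simps)
      thus ?thesis by (simp add: exp_add[symmetric])
    qed
    ultimately show "\<bar>g' w\<bar> * (g w powr (k-1) * \<psi> (-ln (g w))) = (1/k) * exp (-w) * \<psi> (w/k)"
      by (simp add: mult.assoc)
  qed
  show ?thesis
    using has_absolute_integral_change_of_variables_1'[OF S der inj, of "\<lambda>x. x powr (k-1) * \<psi> (-ln x)" b]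
    unfolding fe img .
qed



lemma exp_int:
  "((\<lambda>t::real. 1 / exp t) has_integral 1) {0<..}"
  "(\<lambda>t::real. 1 / exp t) absolutely_integrable_on {0<..}"
proof -
  have c: "((\<lambda>t::real. t powr (1-1::real) / exp t) has_integral 1) {0<..}"
    using gamma_int0[of "1::real"] by simp
  have "((\<lambda>t::real. 1 / exp t) has_integral 1) {0<..} = ((\<lambda>t::real. t powr (1-1::real) / exp t) has_integral 1) {0<..}"
    by (rule has_integral_cong) force
  with c show I: "((\<lambda>t::real. 1 / exp t) has_integral 1) {0<..}" by simp
  show "(\<lambda>t::real. 1 / exp t) absolutely_integrable_on {0<..}"
    by (rule nonnegative_absolutely_integrable_1) (use I in auto)
qed

definition A1 :: real where "A1 = integral {0<..} (\<lambda>t::real. \<bar>ln t / exp t\<bar>)"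

lemma A1_int: "(\<lambda>t::real. \<bar>ln t / exp t\<bar>) absolutely_integrable_on {0<..}"
  using set_integrable_abs[OF gamma_ln(2)] .

lemma J_ln:
  fixes k :: real
  assumes k: "k > 0"
  shows "(\<lambda>x. x powr (k-1) * ln (-ln x)) absolutely_integrable_on {0<..<1}"
    "integral {0<..<1} (\<lambda>x. x powr (k-1) * ln (-ln x)) = -(euler_mascheroni + ln k) / k"
    "(\<lambda>x. x powr (k-1) * \<bar>ln (-ln x)\<bar>) absolutely_integrable_on {0<..<1}"
    "integral {0<..<1} (\<lambda>x. x powr (k-1) * \<bar>ln (-ln x)\<bar>) \<le> (A1 + \<bar>ln k\<bar>) / k"
proof -
  define F where "F w = (1/k) * exp (-w) * ln (w/k)" for w :: real
  define G where "G w = (1/k) * (ln w / exp w) - (ln k / k) * (1 / exp w)" for w :: real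
  have FG: "F w = G w" if "w \<in> {0<..}" for w
    using that k unfolding F_def G_def by (simp add: ln_div exp_minus field_simps)
  have Gi: "(G has_integral (1/k) * (- euler_mascheroni) - (ln k / k) * 1) {0<..}"
    unfolding G_def by (intro has_integral_diff has_integral_mult_right gamma_ln(1) exp_int(1))
  have Ga: "G absolutely_integrable_on {0<..}"
    unfolding G_def by (intro set_integral_diff(1) set_integrable_mult_right gamma_ln(2) exp_int(2))
  have Fa: "F absolutely_integrable_on {0<..}"
    by (rule absolutely_integrable_spike[OF Ga negligible_empty]) (use FG in auto)
  have Fi: "integral {0<..} F = -(euler_mascheroni + ln k) / k"
  proof -
    have "integral {0<..} F = integral {0<..} G" by (rule integral_cong) (use FG in auto)
    also have "\<dots> = (1/k) * (- euler_mascheroni) - (ln k / k) * 1" using Gi by (rule integral_unique)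
    finally show ?thesis using k by (simp add: field_simps)
  qed
  from Fa Fi subst_exp[OF k, of ln "-(euler_mascheroni + ln k) / k"]
  show A: "(\<lambda>x. x powr (k-1) * ln (-ln x)) absolutely_integrable_on {0<..<1}"
    and "integral {0<..<1} (\<lambda>x. x powr (k-1) * ln (-ln x)) = -(euler_mascheroni + ln k) / k"
    unfolding F_def by auto
  have e1: "(\<lambda>x. x powr (k-1) * \<bar>ln (-ln x)\<bar>) = (\<lambda>x. \<bar>x powr (k-1) * ln (-ln x)\<bar>)"
    by (auto simp: abs_mult)
  show "(\<lambda>x. x powr (k-1) * \<bar>ln (-ln x)\<bar>) absolutely_integrable_on {0<..<1}"
    unfolding e1 using set_integrable_abs[OF A] .
  define H where "H w = (1/k) * exp (-w) * \<bar>ln (w/k)\<bar>" for w :: real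
  have e2: "H = (\<lambda>w. \<bar>F w\<bar>)" unfolding H_def F_def using k by (auto simp: abs_mult)
  have Ha: "H absolutely_integrable_on {0<..}" unfolding e2 using set_integrable_abs[OF Fa] .
  have i1: "(\<lambda>w::real. \<bar>ln w / exp w\<bar>) integrable_on {0<..}"
    using A1_int by (rule set_lebesgue_integral_eq_integral(1))
  have i2: "(\<lambda>w::real. 1 / exp w) integrable_on {0<..}"
    using exp_int(1) by (rule has_integral_integrable)
  have "integral {0<..<1} (\<lambda>x. x powr (k-1) * \<bar>ln (-ln x)\<bar>) = integral {0<..} H"
    using Ha subst_exp[OF k, of "\<lambda>y. \<bar>ln y\<bar>" "integral {0<..} H"] unfolding H_def by auto
  also have "\<dots> \<le> integral {0<..} (\<lambda>w. (1/k) * \<bar>ln w / exp w\<bar> + (\<bar>ln k\<bar> / k) * (1 / exp w))"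
  proof (rule integral_le)
    show "H integrable_on {0<..}" using Ha by (rule set_lebesgue_integral_eq_integral(1))
    show "(\<lambda>w. (1/k) * \<bar>ln w / exp w\<bar> + (\<bar>ln k\<bar> / k) * (1 / exp w)) integrable_on {0<..}"
      by (intro integrable_add integrable_on_mult_right i1 i2)
    fix w :: real assume w: "w \<in> {0<..}"
    have "\<bar>ln (w/k)\<bar> \<le> \<bar>ln w\<bar> + \<bar>ln k\<bar>" using w k by (simp add: ln_div)
    hence "(1/k) * exp (-w) * \<bar>ln (w/k)\<bar> \<le> (1/k) * exp (-w) * (\<bar>ln w\<bar> + \<bar>ln k\<bar>)"
      using k by (intro mult_left_mono) auto
    thus "H w \<le> (1/k) * \<bar>ln w / exp w\<bar> + (\<bar>ln k\<bar> / k) * (1 / exp w)"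
      unfolding H_def by (simp add: exp_minus field_simps abs_divide) (simp add: add_divide_distrib add.commute)
  qed
  also have "\<dots> = (1/k) * A1 + (\<bar>ln k\<bar> / k) * 1"
    unfolding A1_def
    by (intro integral_unique has_integral_add has_integral_mult_right exp_int(1) integrable_integral i1)
  finally show "integral {0<..<1} (\<lambda>x. x powr (k-1) * \<bar>ln (-ln x)\<bar>) \<le> (A1 + \<bar>ln k\<bar>) / k"
    by (simp add: add_divide_distrib)
qed

lemma J_one:
  fixes k :: real
  assumes k: "k > 0"
  shows "(\<lambda>x. x powr (k-1)) absolutely_integrable_on {0<..<1}"
    "integral {0<..<1} (\<lambda>x. x powr (k-1)) = 1 / k"
proof -
  have H1: "((\<lambda>w. (1/k) * (1 / exp w)) has_integral (1/k)) {0<..}"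
    using has_integral_mult_right[OF exp_int(1), of "1/k"] by simp
  have H2: "(\<lambda>w. (1/k) * (1 / exp w)) absolutely_integrable_on {0<..}"
    by (intro set_integrable_mult_right exp_int(2))
  have e: "(\<lambda>w. (1/k) * exp (-w) * (\<lambda>_. 1::real) (w/k)) = (\<lambda>w. (1/k) * (1 / exp w))"
    by (rule ext) (simp add: exp_minus divide_inverse)
  have "(\<lambda>w. (1/k) * exp (-w) * (\<lambda>_. 1::real) (w/k)) absolutely_integrable_on {0<..} \<and>
      integral {0<..} (\<lambda>w. (1/k) * exp (-w) * (\<lambda>_. 1::real) (w/k)) = 1/k"
    unfolding e by (intro conjI H2 integral_unique[OF H1])
  hence "(\<lambda>x. x powr (k-1) * (\<lambda>_. 1::real) (-ln x)) absolutely_integrable_on {0<..<1} \<and>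
      integral {0<..<1} (\<lambda>x. x powr (k-1) * (\<lambda>_. 1::real) (-ln x)) = 1/k"
    using subst_exp[OF k, of "\<lambda>_. 1" "1/k"] by blast
  thus "(\<lambda>x. x powr (k-1)) absolutely_integrable_on {0<..<1}"
    "integral {0<..<1} (\<lambda>x. x powr (k-1)) = 1 / k" by auto
qed



lemma log_series_pos:
  fixes y :: real
  assumes "0 \<le> y" "y < 1"
  shows "(\<lambda>n. - (y^n / real n)) sums ln (1 - y)"
  using ln_series'[of "-y"] assms by simp

lemma powr_nat_minus1:
  assumes "x > (0::real)" "n > 0"
  shows "x powr (real n - 1) = x ^ n / x"
  using assms by (simp add: powr_diff powr_realpow)

lemma series_swap:
  fixes m :: nat and \<phi> :: "real \<Rightarrow> real" and B :: "real \<Rightarrow> real"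
  assumes m: "m \<ge> 1"
    and ai: "\<And>k. k > 0 \<Longrightarrow> (\<lambda>x. x powr (k-1) * \<phi> x) absolutely_integrable_on {0<..<1}"
    and bd: "\<And>k. k > 0 \<Longrightarrow> integral {0<..<1} (\<lambda>x. x powr (k-1) * \<bar>\<phi> x\<bar>) \<le> B k"
    and sb: "summable (\<lambda>n. B (real (m*n)) / real n)"
  shows "(\<lambda>x. ln (1 - x^m) * \<phi> x / x) absolutely_integrable_on {0<..<1}"
    "integral {0<..<1} (\<lambda>x. ln (1 - x^m) * \<phi> x / x) =
       (\<Sum>n. - (1 / real n) * integral {0<..<1} (\<lambda>x. x powr (real (m*n) - 1) * \<phi> x))"
proof -
  define S :: "real set" where "S = {0<..<1}"
  define u where "u n x = - (1 / real n) * (x powr (real (m*n) - 1) * \<phi> x)" for n x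
  define v where "v n x = indicator S x *\<^sub>R u n x" for n x
  have ui: "set_integrable lebesgue S (u n)" for n
    unfolding u_def S_def
  proof (rule set_integrable_mult_right)
    assume "- (1 / real n) \<noteq> 0"
    hence "n > 0" by auto
    hence "real (m*n) > 0" using m by simp
    thus "set_integrable lebesgue {0<..<1} (\<lambda>x. x powr (real (m*n) - 1) * \<phi> x)" by (rule ai)
  qed
  have vi: "integrable lebesgue (v n)" for n
    using ui[of n] unfolding v_def set_integrable_def .
  have ueq: "u n x = - (((x^m)^n / real n)) * (\<phi> x / x)" if "x \<in> S" for n x
  proof (cases "n = 0")
    case True thus ?thesis unfolding u_def by simp
  next
    case False
    have x: "x > 0" using that unfolding S_def by simp
    have "x powr (real (m*n) - 1) = x ^ (m*n) / x"
      using powr_nat_minus1[OF x, of "m*n"] False m by simp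
    thus ?thesis unfolding u_def by (simp add: power_mult field_simps)
  qed
  have sums_u: "(\<lambda>n. u n x) sums (ln (1 - x^m) * \<phi> x / x)" if "x \<in> S" for x
  proof -
    have x: "0 < x" "x < 1" using that unfolding S_def by auto
    have y: "0 \<le> x^m" "x^m < 1" using x m by (auto simp: power_less_one_iff)
    have "(\<lambda>n. - ((x^m)^n / real n) * (\<phi> x / x)) sums (ln (1 - x^m) * (\<phi> x / x))"
      by (intro sums_mult2 log_series_pos y)
    thus ?thesis using ueq[OF that] by simp
  qed
  have summ_abs: "summable (\<lambda>n. norm (v n x))" for x
  proof (cases "x \<in> S")
    case True
    have x: "0 < x" "x < 1" using True unfolding S_def by auto
    have y: "0 \<le> x^m" "x^m < 1" using x m by (auto simp: power_less_one_iff)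
    have "summable (\<lambda>n. - ((x^m)^n / real n))" using log_series_pos[OF y] by (rule sums_summable)
    hence "summable (\<lambda>n. ((x^m)^n / real n))" using summable_minus_iff by blast
    hence "summable (\<lambda>n. ((x^m)^n / real n) * \<bar>\<phi> x / x\<bar>)" by (rule summable_mult2)
    moreover have "norm (v n x) = ((x^m)^n / real n) * \<bar>\<phi> x / x\<bar>" for n
      unfolding v_def using True ueq[OF True, of n] y by (simp add: abs_mult)
    ultimately show ?thesis by simp
  next
    case False thus ?thesis unfolding v_def by simp
  qed
  have nint: "(\<integral>x. norm (v n x) \<partial>lebesgue) = (1 / real n) * integral S (\<lambda>x. x powr (real (m*n) - 1) * \<bar>\<phi> x\<bar>)" for n
  proof -
    have "(\<integral>x. norm (v n x) \<partial>lebesgue) = (LINT x:S|lebesgue. \<bar>u n x\<bar>)"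
      unfolding v_def set_lebesgue_integral_def by (intro Bochner_Integration.integral_cong) (auto simp: indicator_def)
    also have "\<dots> = integral S (\<lambda>x. \<bar>u n x\<bar>)"
      by (rule set_lebesgue_integral_eq_integral(2)[OF set_integrable_abs[OF ui]])
    also have "\<dots> = integral S (\<lambda>x. (x powr (real (m*n) - 1) * \<bar>\<phi> x\<bar>) * (1 / real n))"
      unfolding u_def by (intro integral_cong) (auto simp: abs_mult)
    finally show ?thesis by simp
  qed
  have summ_int: "summable (\<lambda>n. \<integral>x. norm (v n x) \<partial>lebesgue)"
  proof (rule summable_comparison_test[OF _ sb])
    show "\<exists>N. \<forall>n\<ge>N. norm (\<integral>x. norm (v n x) \<partial>lebesgue) \<le> B (real (m*n)) / real n"
    proof (intro exI allI impI)
      fix n :: nat assume "n \<ge> 1"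
      hence k: "real (m*n) > 0" using m by simp
      have nn: "0 \<le> (\<integral>x. norm (v n x) \<partial>lebesgue)" by simp
      have "(\<integral>x. norm (v n x) \<partial>lebesgue) \<le> (1 / real n) * B (real (m*n))"
        unfolding nint S_def using bd[OF k] \<open>n \<ge> 1\<close> by (intro mult_left_mono) auto
      thus "norm (\<integral>x. norm (v n x) \<partial>lebesgue) \<le> B (real (m*n)) / real n" using nn by simp
    qed
  qed
  have AE: "AE x in lebesgue. summable (\<lambda>n. norm (v n x))" using summ_abs by simp
  have sumv: "(\<Sum>n. v n x) = indicator S x *\<^sub>R (ln (1 - x^m) * \<phi> x / x)" for x
  proof (cases "x \<in> S")
    case True thus ?thesis unfolding v_def using sums_unique[OF sums_u[OF True]] by simp
  next
    case False thus ?thesis unfolding v_def by simp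
  qed
  have I: "integrable lebesgue (\<lambda>x. \<Sum>n. v n x)" by (rule integrable_suminf[OF vi AE summ_int])
  show A: "(\<lambda>x. ln (1 - x^m) * \<phi> x / x) absolutely_integrable_on {0<..<1}"
    using I unfolding sumv set_integrable_def S_def .
  have "integral {0<..<1} (\<lambda>x. ln (1 - x^m) * \<phi> x / x) = (LINT x:S|lebesgue. ln (1 - x^m) * \<phi> x / x)"
    using set_lebesgue_integral_eq_integral(2)[OF A] unfolding S_def by simp
  also have "\<dots> = (\<integral>x. (\<Sum>n. v n x) \<partial>lebesgue)"
    unfolding sumv set_lebesgue_integral_def ..
  also have "\<dots> = (\<Sum>n. \<integral>x. v n x \<partial>lebesgue)" by (rule integral_suminf[OF vi AE summ_int])
  also have "\<dots> = (\<Sum>n. - (1 / real n) * integral {0<..<1} (\<lambda>x. x powr (real (m*n) - 1) * \<phi> x))"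
  proof (rule suminf_cong)
    fix n
    have "(\<integral>x. v n x \<partial>lebesgue) = integral S (u n)"
      using set_lebesgue_integral_eq_integral(2)[OF ui[of n]] unfolding v_def set_lebesgue_integral_def .
    also have "\<dots> = integral S (\<lambda>x. (x powr (real (m*n) - 1) * \<phi> x) * (- (1 / real n)))"
      unfolding u_def by (simp add: mult.commute)
    finally show "(\<integral>x. v n x \<partial>lebesgue) = - (1 / real n) * integral {0<..<1} (\<lambda>x. x powr (real (m*n) - 1) * \<phi> x)"
      unfolding S_def by (simp add: mult.commute)
  qed
  finally show "integral {0<..<1} (\<lambda>x. ln (1 - x^m) * \<phi> x / x) =
       (\<Sum>n. - (1 / real n) * integral {0<..<1} (\<lambda>x. x powr (real (m*n) - 1) * \<phi> x))" .
qed



lemma ln_le_powr_div: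
  assumes "x > (0::real)" "a > 0"
  shows "ln x \<le> x powr a / a"
proof -
  have "ln (x powr a) \<le> x powr a - 1" using ln_le_minus_one[of "x powr a"] assms by simp
  hence "a * ln x \<le> x powr a" using assms by (simp add: ln_powr)
  thus ?thesis using assms by (simp add: field_simps)
qed

lemma summable_powr_neg:
  assumes "s > (1::real)"
  shows "summable (\<lambda>n. real n powr (-s))"
  using summable_real_powr_iff[of "-s"] assms by simp

lemma summable_ln_sq: "summable (\<lambda>n. ln (real n) / (real n)^2)"
proof (rule summable_comparison_test[OF _ summable_mult[OF summable_powr_neg[of "3/2"], of 2]])
  show "\<exists>N. \<forall>n\<ge>N. norm (ln (real n) / (real n)^2) \<le> 2 * real n powr (-(3/2))"
  proof (intro exI allI impI)
    fix n :: nat assume n: "n \<ge> 1"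
    hence x: "real n > 0" "real n \<ge> 1" by auto
    have l: "0 \<le> ln (real n)" using x by simp
    have "ln (real n) \<le> real n powr (1/2) / (1/2)" by (rule ln_le_powr_div) (use x in auto)
    moreover have "real n powr (-(3/2)) * real n powr 2 = real n powr (1/2)"
      by (subst powr_add[symmetric]) simp
    moreover have "real n powr 2 = (real n)^2" using x by simp
    ultimately have "ln (real n) \<le> 2 * real n powr (-(3/2)) * (real n)^2" by simp
    hence "ln (real n) / (real n)^2 \<le> 2 * real n powr (-(3/2))"
      using x by (simp add: divide_le_eq)
    thus "norm (ln (real n) / (real n)^2) \<le> 2 * real n powr (-(3/2))"
      using l by simp
  qed
qed simp

lemma summable_inv_sq: "summable (\<lambda>n. 1 / (real n)^2)"
proof -
  have "summable (\<lambda>n. 1 / (real (Suc n))^2)"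
    using sums_summable[OF inverse_squares_sums] by simp
  thus ?thesis by (subst summable_Suc_iff[symmetric])
qed

lemma inv_sq_sums: "(\<lambda>n. 1 / (real n)^2) sums (pi^2/6)"
proof -
  have "(\<lambda>n. 1 / (real (Suc n))^2) sums (pi^2/6)"
    using inverse_squares_sums by simp
  hence "(\<lambda>n. 1 / (real n)^2) sums (pi^2/6 + 1 / (real 0)^2)"
    by (subst sums_Suc_iff[symmetric])
  thus ?thesis by simp
qed



lemma zeta_deriv:
  "deriv riemann_zeta 2 = - complex_of_real (\<Sum>n. ln (real n) / (real n)^2)"
proof -
  define S :: "complex set" where "S = ball 2 (1/2)"
  define a :: "nat \<Rightarrow> complex" where "a n = of_nat (Suc n)" for n
  define f where "f n s = 1 / a n powr s" for n s
  define f' where "f' n s = - Ln (a n) / a n powr s" for n s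
  have a0: "a n \<noteq> 0" for n unfolding a_def by (simp del: of_nat_Suc)
  have reS: "Re s > 3/2" if "s \<in> S" for s
  proof -
    have "dist 2 s < 1/2" using that unfolding S_def by simp
    hence "\<bar>Re 2 - Re s\<bar> < 1/2" using abs_Re_le_cmod[of "2 - s"] by (simp add: dist_norm)
    hence "\<bar>2 - Re s\<bar> < 1/2" by simp
    thus ?thesis unfolding abs_less_iff by linarith
  qed
  have der: "(f n has_field_derivative f' n s) (at s within S)" for n s
  proof -
    have "((\<lambda>s. 1 / a n powr s) has_field_derivative
            - (Ln (a n) * a n powr s) / (a n powr s)^2) (at s)"
      using a0[of n] by (auto intro!: derivative_eq_intros simp: power2_eq_square)
    moreover have "- (Ln (a n) * a n powr s) / (a n powr s)^2 = f' n s"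
      unfolding f'_def using a0[of n] by (simp add: power2_eq_square)
    ultimately show ?thesis unfolding f_def by (auto intro: has_field_derivative_at_within)
  qed
  have bound: "norm (f' n s) \<le> 4 * real (Suc n) powr (-(5/4))" if "s \<in> S" for n s
  proof -
    define x where "x = real (Suc n)"
    have x: "x \<ge> 1" unfolding x_def by simp
    have na: "norm (a n powr s) = x powr Re s" unfolding a_def x_def
      by (subst norm_powr_real_powr) auto
    have nl: "norm (Ln (a n)) = ln x" unfolding a_def x_def
      by (simp del: of_nat_Suc add: Ln_of_nat)
    have "norm (f' n s) = ln x / x powr Re s" unfolding f'_def using na nl by (simp add: norm_divide)
    also have "\<dots> \<le> ln x / x powr (3/2)"
      using x reS[OF that] by (intro divide_left_mono powr_mono mult_pos_pos) auto
    also have "\<dots> \<le> (x powr (1/4) / (1/4)) / x powr (3/2)"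
      using x by (intro divide_right_mono ln_le_powr_div) auto
    also have "\<dots> = 4 * (x powr (1/4) / x powr (3/2))" by simp
    also have "x powr (1/4) / x powr (3/2) = x powr (-(5/4))"
      by (subst powr_diff[symmetric]) simp
    finally show ?thesis unfolding x_def .
  qed
  have summ_M: "summable (\<lambda>n. 4 * real (Suc n) powr (-(5/4)))"
  proof -
    have "summable (\<lambda>n. real (Suc n) powr (-(5/4)))"
      using summable_powr_neg[of "5/4"] by (subst summable_Suc_iff) simp
    thus ?thesis by (rule summable_mult)
  qed
  have ul: "uniform_limit S (\<lambda>n x. \<Sum>i<n. f' i x) (\<lambda>x. \<Sum>i. f' i x) sequentially"
    by (rule Weierstrass_m_test[OF bound summ_M])
  have S2: "2 \<in> S" unfolding S_def by simp
  have summ2: "summable (\<lambda>n. f n 2)"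
  proof (rule summable_norm_cancel, rule summable_comparison_test[OF _ summ_M])
    show "\<exists>N. \<forall>n\<ge>N. norm (norm (f n 2)) \<le> 4 * real (Suc n) powr (-(5/4))"
    proof (intro exI allI impI)
      fix n :: nat
      have "norm (f n 2) = 1 / real (Suc n) powr 2" unfolding f_def a_def
        by (subst norm_divide, subst norm_powr_real_powr) auto
      also have "\<dots> \<le> 1 / real (Suc n) powr (5/4)"
        by (intro divide_left_mono powr_mono) auto
      also have "\<dots> = real (Suc n) powr (-(5/4))" by (simp add: powr_minus_divide)
      also have "\<dots> \<le> 4 * real (Suc n) powr (-(5/4))" by simp
      finally show "norm (norm (f n 2)) \<le> 4 * real (Suc n) powr (-(5/4))" by simp
    qed
  qed
  obtain g where g: "\<And>x. x \<in> S \<Longrightarrow> (\<lambda>n. f n x) sums g x \<and>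
      (g has_field_derivative (\<Sum>i. f' i x)) (at x within S)"
  proof -
    have cS: "convex S" unfolding S_def by simp
    have der': "\<And>n x. x \<in> S \<Longrightarrow> (f n has_field_derivative f' n x) (at x within S)"
      by (rule der)
    show ?thesis using has_field_derivative_series[OF cS der' ul S2 summ2] that by blast
  qed
  have oS: "open S" unfolding S_def by simp
  have gd: "(g has_field_derivative (\<Sum>i. f' i 2)) (at 2)"
    using g[OF S2] at_within_open[OF S2 oS] by simp
  have zg: "g x = riemann_zeta x" if "x \<in> S" for x
  proof -
    have "Re x > 1" using reS[OF that] by simp
    hence "riemann_zeta x = (\<Sum>n. f n x)" unfolding riemann_zeta_def f_def a_def by simp
    thus ?thesis using g[OF that] sums_unique by metis
  qed
  have zd: "(riemann_zeta has_field_derivative (\<Sum>i. f' i 2)) (at 2)"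
    by (rule has_field_derivative_transform_within_open[OF gd oS S2 zg])
  have "deriv riemann_zeta 2 = (\<Sum>i. f' i 2)" by (rule DERIV_imp_deriv[OF zd])
  also have "\<dots> = - complex_of_real (\<Sum>n. ln (real n) / (real n)^2)"
  proof -
    have fr: "f' i 2 = - complex_of_real (ln (real (Suc i)) / (real (Suc i))^2)" for i
    proof -
      have "a i powr 2 = a i ^ 2" using powr_nat'[of "a i" 2] a0[of i] by simp
      thus ?thesis unfolding f'_def a_def by (simp del: of_nat_Suc add: Ln_of_nat)
    qed
    have "(\<lambda>n. ln (real n) / (real n)^2) sums (\<Sum>n. ln (real n) / (real n)^2)"
      using summable_ln_sq by (rule summable_sums)
    hence "(\<lambda>n. ln (real (Suc n)) / (real (Suc n))^2) sums (\<Sum>n. ln (real n) / (real n)^2)"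
      by (subst sums_Suc_iff) simp
    hence "(\<lambda>n. complex_of_real (ln (real (Suc n)) / (real (Suc n))^2)) sums
             complex_of_real (\<Sum>n. ln (real n) / (real n)^2)"
      by (subst sums_of_real_iff)
    hence "(\<lambda>n. f' n 2) sums - complex_of_real (\<Sum>n. ln (real n) / (real n)^2)"
      unfolding fr by (rule sums_minus)
    thus ?thesis by (rule sums_unique[symmetric])
  qed
  finally show ?thesis .
qed



definition Lsum :: real where "Lsum = (\<Sum>n. ln (real n) / (real n)^2)"

lemma ai_hi:
  fixes f :: "'a::euclidean_space \<Rightarrow> 'b::euclidean_space"
  assumes "f absolutely_integrable_on S" "integral S f = v"
  shows "(f has_integral v) S"
  using integrable_integral[OF set_lebesgue_integral_eq_integral(1)[OF assms(1)]] assms(2) by simp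

lemma R_m:
  fixes m :: nat
  assumes m: "m \<ge> 1"
  shows "((\<lambda>x::real. ln (1 - x^m) * ln (-ln x) / x) has_integral
           (1 / real m) * ((euler_mascheroni + ln (real m)) * (pi^2/6) + Lsum)) {0<..<1}"
proof -
  define B where "B k = (A1 + \<bar>ln k\<bar>) / k" for k :: real
  have sb: "summable (\<lambda>n. B (real (m*n)) / real n)"
  proof -
    have SS: "summable (\<lambda>n. ((A1 + ln (real m)) / real m) * (1 / (real n)^2) + (1 / real m) * (ln (real n) / (real n)^2))"
      by (intro summable_add summable_mult summable_inv_sq summable_ln_sq)
    have ev: "eventually (\<lambda>n. B (real (m*n)) / real n =
        ((A1 + ln (real m)) / real m) * (1 / (real n)^2) + (1 / real m) * (ln (real n) / (real n)^2)) sequentially"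
    proof (rule eventually_sequentiallyI[of 1])
      fix n :: nat assume n: "n \<ge> 1"
      have "ln (real (m*n)) = ln (real m) + ln (real n)" using m n by (simp add: ln_mult)
      moreover have "0 \<le> ln (real m) + ln (real n)" using m n by simp
      ultimately show "B (real (m*n)) / real n =
        ((A1 + ln (real m)) / real m) * (1 / (real n)^2) + (1 / real m) * (ln (real n) / (real n)^2)"
        unfolding B_def using m n by (simp add: field_simps power2_eq_square)
    qed
    show ?thesis using summable_cong[OF ev] SS by (rule iffD2)
  qed
  note SW = series_swap[OF m, of "\<lambda>x. ln (-ln x)" B, OF J_ln(1) J_ln(4)[folded B_def] sb]
  have terms: "- (1 / real n) * integral {0<..<1} (\<lambda>x. x powr (real (m*n) - 1) * ln (-ln x)) =
      (1 / real m) * ((euler_mascheroni + ln (real m)) * (1 / (real n)^2) + ln (real n) / (real n)^2)" for n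
  proof (cases "n = 0")
    case True thus ?thesis by simp
  next
    case False
    hence k: "real (m*n) > 0" using m by simp
    have "ln (real (m*n)) = ln (real m) + ln (real n)" using m False by (simp add: ln_mult)
    thus ?thesis using J_ln(2)[OF k] False m by (simp add: field_simps power2_eq_square)
  qed
  have "(\<lambda>n. (1 / real m) * ((euler_mascheroni + ln (real m)) * (1 / (real n)^2) + ln (real n) / (real n)^2))
         sums ((1 / real m) * ((euler_mascheroni + ln (real m)) * (pi^2/6) + Lsum))"
    unfolding Lsum_def
    by (intro sums_mult sums_add inv_sq_sums summable_sums summable_ln_sq)
  hence U: "(\<Sum>n. (1 / real m) * ((euler_mascheroni + ln (real m)) * (1 / (real n)^2) + ln (real n) / (real n)^2))
         = (1 / real m) * ((euler_mascheroni + ln (real m)) * (pi^2/6) + Lsum)"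
    by (rule sums_unique[symmetric])
  have "integral {0<..<1} (\<lambda>x::real. ln (1 - x^m) * ln (-ln x) / x) =
      (\<Sum>n. - (1 / real n) * integral {0<..<1} (\<lambda>x. x powr (real (m*n) - 1) * ln (-ln x)))"
    by (rule SW(2))
  also have "\<dots> = (1 / real m) * ((euler_mascheroni + ln (real m)) * (pi^2/6) + Lsum)"
    unfolding terms by (rule U)
  finally have V: "integral {0<..<1} (\<lambda>x::real. ln (1 - x^m) * ln (-ln x) / x) =
      (1 / real m) * ((euler_mascheroni + ln (real m)) * (pi^2/6) + Lsum)" .
  have W: "(\<lambda>x::real. ln (1 - x^m) * ln (-ln x) / x) absolutely_integrable_on {0<..<1}" by (rule SW(1))
  show ?thesis by (rule ai_hi[OF W V])
qed

lemma Q_m: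
  fixes m :: nat
  assumes m: "m \<ge> 1"
  shows "((\<lambda>x::real. ln (1 - x^m) * 1 / x) has_integral - (1 / real m) * (pi^2/6)) {0<..<1}"
proof -
  define B where "B k = 1 / k" for k :: real
  have ai: "(\<lambda>x. x powr (k-1) * 1) absolutely_integrable_on {0<..<1}" if "k > 0" for k :: real
    using J_one(1)[OF that] by simp
  have bd: "integral {0<..<1} (\<lambda>x. x powr (k-1) * \<bar>1\<bar>) \<le> B k" if "k > 0" for k :: real
    using J_one(2)[OF that] unfolding B_def by simp
  have sb: "summable (\<lambda>n. B (real (m*n)) / real n)"
  proof -
    have "summable (\<lambda>n. (1 / real m) * (1 / (real n)^2))"
      by (intro summable_mult summable_inv_sq)
    moreover have "B (real (m*n)) / real n = (1 / real m) * (1 / (real n)^2)" for n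
      unfolding B_def by (simp add: power2_eq_square)
    ultimately show ?thesis by simp
  qed
  note SW = series_swap[OF m, of "\<lambda>x. 1" B, OF ai bd sb]
  have terms: "- (1 / real n) * integral {0<..<1} (\<lambda>x. x powr (real (m*n) - 1) * 1) =
      - (1 / real m) * (1 / (real n)^2)" for n
  proof (cases "n = 0")
    case True thus ?thesis by simp
  next
    case False
    hence k: "real (m*n) > 0" using m by simp
    thus ?thesis using J_one(2)[OF k] False m by (simp add: field_simps power2_eq_square)
  qed
  have "(\<lambda>n. - (1 / real m) * (1 / (real n)^2)) sums (- (1 / real m) * (pi^2/6))"
    by (intro sums_mult inv_sq_sums)
  hence U: "(\<Sum>n. - (1 / real m) * (1 / (real n)^2)) = - (1 / real m) * (pi^2/6)"
    by (rule sums_unique[symmetric])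
  have "integral {0<..<1} (\<lambda>x::real. ln (1 - x^m) * 1 / x) =
      (\<Sum>n. - (1 / real n) * integral {0<..<1} (\<lambda>x. x powr (real (m*n) - 1) * 1))"
    by (rule SW(2))
  also have "\<dots> = - (1 / real m) * (pi^2/6)"
    unfolding terms by (rule U)
  finally have V: "integral {0<..<1} (\<lambda>x::real. ln (1 - x^m) * 1 / x) = - (1 / real m) * (pi^2/6)" .
  have W: "(\<lambda>x::real. ln (1 - x^m) * 1 / x) absolutely_integrable_on {0<..<1}" by (rule SW(1))
  show ?thesis by (rule ai_hi[OF W V])
qed



lemma ln_split:
  fixes x :: real
  assumes "0 < x" "x < 1"
  shows "ln ((1 - x) * (x^2 + 1)) = ln (1 - x^1) + ln (1 - x^4) - ln (1 - x^2)"
proof -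
  have p2: "0 < 1 - x^2" using assms by (simp add: power_less_one_iff)
  have p4: "1 - x^4 = (1 - x^2) * (x^2 + 1)" by (simp add: algebra_simps power2_eq_square power4_eq_xxxx)
  have q: "0 < x^2 + 1" by (intro add_nonneg_pos zero_le_power2) simp
  have "ln (1 - x^4) = ln (1 - x^2) + ln (x^2 + 1)"
    unfolding p4 by (rule ln_mult_pos[OF p2 q])
  moreover have "ln ((1 - x) * (x^2 + 1)) = ln (1 - x) + ln (x^2 + 1)"
    by (rule ln_mult_pos) (use assms q in auto)
  ultimately show ?thesis by simp
qed

lemma Ln_neg_real:
  fixes y :: real
  assumes "y < 0"
  shows "Ln (complex_of_real y) = complex_of_real (ln (-y)) + \<i> * complex_of_real pi"
proof -
  have z: "complex_of_real (-y) \<noteq> 0" using assms by simp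
  have "Ln (- complex_of_real (-y)) = Ln (complex_of_real (-y)) + \<i> * pi"
    using Ln_minus[OF z] assms by simp
  thus ?thesis using Ln_of_real[of "-y"] assms by simp
qed

theorem mainTheorem14:
  shows "((\<lambda>x::real. complex_of_real (ln ((1 - x) * (x\<^sup>2 + 1)))
            * Ln (complex_of_real (ln x)) / complex_of_real x)
          has_integral
          (1/8) * (- 6 * deriv riemann_zeta 2
                   + (euler_mascheroni - \<i> * of_real pi) * of_real (pi\<^sup>2))) {0<..<1}"
proof -
  define P where "P = pi^2/6"
  define IA where "IA = (1 / real (1::nat)) * ((euler_mascheroni + ln (real (1::nat))) * P + Lsum)
      + (1 / real (4::nat)) * ((euler_mascheroni + ln (real (4::nat))) * P + Lsum)
      - (1 / real (2::nat)) * ((euler_mascheroni + ln (real (2::nat))) * P + Lsum)"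
  define IB where "IB = pi * (- (1 / real (1::nat)) * P + - (1 / real (4::nat)) * P - - (1 / real (2::nat)) * P)"
  define A where "A x = ln ((1 - x) * (x^2 + 1)) * ln (-ln x) / x" for x :: real
  define B where "B x = pi * (ln ((1 - x) * (x^2 + 1)) * 1 / x)" for x :: real
  have RA: "((\<lambda>x::real. ln (1 - x^1) * ln (-ln x) / x + ln (1 - x^4) * ln (-ln x) / x
        - ln (1 - x^2) * ln (-ln x) / x) has_integral IA) {0<..<1}"
    unfolding IA_def P_def
    by (intro has_integral_diff has_integral_add R_m) auto
  have RB: "((\<lambda>x::real. pi * (ln (1 - x^1) * 1 / x + ln (1 - x^4) * 1 / x
        - ln (1 - x^2) * 1 / x)) has_integral IB) {0<..<1}"
    unfolding IB_def P_def
    by (intro has_integral_mult_right has_integral_diff has_integral_add Q_m) auto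
  have A_int: "(A has_integral IA) {0<..<1}"
  proof -
    have "A x = ln (1 - x^1) * ln (-ln x) / x + ln (1 - x^4) * ln (-ln x) / x
        - ln (1 - x^2) * ln (-ln x) / x" if "x \<in> {0<..<1}" for x
    proof -
      have "A x = (ln (1 - x^1) + ln (1 - x^4) - ln (1 - x^2)) * ln (-ln x) / x"
        unfolding A_def using ln_split[of x] that by simp
      thus ?thesis by (simp only: ring_distribs diff_divide_distrib add_divide_distrib)
    qed
    thus ?thesis using RA by (subst has_integral_cong) auto
  qed
  have B_int: "(B has_integral IB) {0<..<1}"
  proof -
    have "B x = pi * (ln (1 - x^1) * 1 / x + ln (1 - x^4) * 1 / x
        - ln (1 - x^2) * 1 / x)" if "x \<in> {0<..<1}" for x
    proof -
      have "B x = pi * ((ln (1 - x^1) + ln (1 - x^4) - ln (1 - x^2)) * 1 / x)"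
        unfolding B_def using ln_split[of x] that by simp
      thus ?thesis by (simp only: ring_distribs diff_divide_distrib add_divide_distrib)
    qed
    thus ?thesis using RB by (subst has_integral_cong) auto
  qed
  have C_int: "((\<lambda>x. complex_of_real (A x) + \<i> * complex_of_real (B x)) has_integral
      (complex_of_real IA + \<i> * complex_of_real IB)) {0<..<1}"
    by (intro has_integral_add has_integral_mult_right has_integral_of_real A_int B_int)
  have eq: "complex_of_real (ln ((1 - x) * (x\<^sup>2 + 1))) * Ln (complex_of_real (ln x)) / complex_of_real x
      = complex_of_real (A x) + \<i> * complex_of_real (B x)" if "x \<in> {0<..<1}" for x :: real
  proof -
    have "ln x < 0" using that by simp
    moreover have "x \<noteq> 0" using that by simp
    ultimately show ?thesis using Ln_neg_real[of "ln x"]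
      unfolding A_def B_def by (simp add: field_simps)
  qed
  have val: "complex_of_real IA + \<i> * complex_of_real IB =
      (1/8) * (- 6 * deriv riemann_zeta 2 + (euler_mascheroni - \<i> * of_real pi) * of_real (pi\<^sup>2))"
  proof -
    have l4: "ln (4::real) = 2 * ln 2"
      using ln_mult[of "2::real" 2] by simp
    have "IA = euler_mascheroni * pi^2 / 8 + 3/4 * Lsum"
      unfolding IA_def P_def using l4 by (simp add: field_simps)
    moreover have "IB = -(pi^3) / 8"
      unfolding IB_def P_def by (simp add: field_simps power2_eq_square power3_eq_cube)
    moreover have "deriv riemann_zeta 2 = - complex_of_real Lsum"
      unfolding Lsum_def by (rule zeta_deriv)
    moreover have "Re (euler_mascheroni :: complex) = euler_mascheroni"
      by (metis of_real_euler_mascheroni Re_complex_of_real)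
    moreover have "Im (euler_mascheroni :: complex) = 0"
      by (metis of_real_euler_mascheroni Im_complex_of_real)
    ultimately show ?thesis
      by (simp add: complex_eq_iff field_simps power2_eq_square power3_eq_cube)
  qed
  show ?thesis unfolding val[symmetric]
    using C_int eq by (subst has_integral_cong) auto
qed


end
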